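(* Let $R \in \mathcal{R}$ and let $R^\perp = \bigcup\{X : X \text{ is a nice set and } R = X \to \mathcal{N}\}$. Then (1) $R^\perp$ is a nice set, and (2) $R = R^\perp \to \mathcal{N}$.
   Context: With disjoint sets of $\lambda$-variables $x,y,\dots$ and $\mu$-variables $a,b,\dots$, terms and $\mathcal{E}$-terms are $\mathcal{T} ::= x \mid \lambda x.\mathcal{T} \mid (\mathcal{T}\;\mathcal{E}) \mid \langle \mathcal{T},\mathcal{T}\rangle \mid \omega_1\mathcal{T} \mid \omega_2\mathcal{T} \mid \mu a.\mathcal{T} \mid (a\;\mathcal{T})$, $\mathcal{E} ::= \mathcal{T} \mid \pi_1 \mid \pi_2 \mid [x.\mathcal{T}, y.\mathcal{T}]$ (up to renaming of bound variables). The one-step reduction $\triangleright$ is the closure under all constructors of: $(\lambda x.u\;v)\triangleright u[x:=v]$; $(\langle t_1,t_2\rangle\;\pi_i)\triangleright t_i$; $(\omega_i t\;[x_1.u_1,x_2.u_2])\triangleright u_i[x_i:=t]$; $((t\;[x_1.u_1,x_2.u_2])\;\varepsilon)\triangleright(t\;[x_1.(u_1\;\varepsilon),x_2.(u_2\;\varepsilon)])$; $(\mu a.t\;\varepsilon)\triangleright\mu a.t[a:=^*\varepsilon]$, where $t[a:=^*\varepsilon]$ replaces inductively each subterm $(a\;v)$ by $(a\;(v\;\varepsilon))$. $\mathcal{N}$ (resp. $\mathcal{N}'$) is the set of strongly normalizable terms (resp. $\mathcal{E}$-terms), $\mathcal{N}'^{<\omega}$ the set of finite sequences of elements of $\mathcal{N}'$.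 For $\bar{w}=w_1\dots w_n$ and a term $t$, $(t\;\bar{w})$ is $t$ if $n=0$ and $((t\;w_1)\;w_2\dots w_n)$ otherwise. For $S\subseteq\mathcal{N}'^{<\omega}$ and a set of terms $K$, $S\to K=\{t\in\mathcal{T} : (t\;\bar{w})\in K \text{ for each } \bar{w}\in S\}$. A sequence $\bar{w}\in\mathcal{N}'^{<\omega}$ is nice iff none of $w_1,\dots,w_{n-1}$ is of the form $[x.u,y.v]$; a set $X\subseteq\mathcal{N}'^{<\omega}$ is nice iff all its elements are nice. For sets $K,L$ of terms: $K\to L=\{t : (t\;u)\in L \text{ for all } u\in K\}$; $K\wedge L=\{t : (t\;\pi_1)\in K, (t\;\pi_2)\in L\}$; $K\vee L=\{t :$ for all $\lambda$-variables $x,y$ and all $u,v\in\mathcal{N}$, if $u[x:=r]\in\mathcal{N}$ and $v[y:=s]\in\mathcal{N}$ for all $r\in K,s\in L$, then $(t\;[x.u,y.v])\in\mathcal{N}\}$. $\mathcal{R}$ is the smallest set of sets of terms containing $\mathcal{N}$ and closed under $\to,\wedge,\vee$. *)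

theory Defs
  imports Main
begin

text \<open>Terms of the lambda-mu calculus with pairs and sums, in de Bruijn
representation (terms up to renaming of bound variables).  There are two
separate index spaces: lambda-variables (Var i) and mu-variables (Named a t
stands for (a t)).  Lam and the two branches of Cas bind a lambda-variable,
Mu binds a mu-variable.\<close>

datatype trm =
    Var nat
  | Lam trm
  | App trm etrm
  | Pair trm trm
  | In1 trm
  | In2 trm
  | Mu trm
  | Named nat trm
and etrm =
    Tm trm
  | Pi1
  | Pi2
  | Cas trm trm

primrec liftL :: "nat \<Rightarrow> trm \<Rightarrow> trm" and liftLe :: "nat \<Rightarrow> etrm \<Rightarrow> etrm" where
  "liftL k (Var i) = Var (if i < k then i else Suc i)"
| "liftL k (Lam t) = Lam (liftL (Suc k) t)"
| "liftL k (App t e) = App (liftL k t) (liftLe k e)"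
| "liftL k (Pair t u) = Pair (liftL k t) (liftL k u)"
| "liftL k (In1 t) = In1 (liftL k t)"
| "liftL k (In2 t) = In2 (liftL k t)"
| "liftL k (Mu t) = Mu (liftL k t)"
| "liftL k (Named a t) = Named a (liftL k t)"
| "liftLe k (Tm t) = Tm (liftL k t)"
| "liftLe k Pi1 = Pi1"
| "liftLe k Pi2 = Pi2"
| "liftLe k (Cas u v) = Cas (liftL (Suc k) u) (liftL (Suc k) v)"

primrec liftM :: "nat \<Rightarrow> trm \<Rightarrow> trm" and liftMe :: "nat \<Rightarrow> etrm \<Rightarrow> etrm" where
  "liftM k (Var i) = Var i"
| "liftM k (Lam t) = Lam (liftM k t)"
| "liftM k (App t e) = App (liftM k t) (liftMe k e)"
| "liftM k (Pair t u) = Pair (liftM k t) (liftM k u)"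
| "liftM k (In1 t) = In1 (liftM k t)"
| "liftM k (In2 t) = In2 (liftM k t)"
| "liftM k (Mu t) = Mu (liftM (Suc k) t)"
| "liftM k (Named a t) = Named (if a < k then a else Suc a) (liftM k t)"
| "liftMe k (Tm t) = Tm (liftM k t)"
| "liftMe k Pi1 = Pi1"
| "liftMe k Pi2 = Pi2"
| "liftMe k (Cas u v) = Cas (liftM k u) (liftM k v)"

text \<open>substL k s t = t[k := s] (capture-avoiding substitution for the
lambda-variable k; free lambda-variables above k are decremented).\<close>
primrec substL :: "nat \<Rightarrow> trm \<Rightarrow> trm \<Rightarrow> trm"
  and substLe :: "nat \<Rightarrow> trm \<Rightarrow> etrm \<Rightarrow> etrm" where
  "substL k s (Var i) = (if i < k then Var i else if i = k then s else Var (i - 1))"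
| "substL k s (Lam t) = Lam (substL (Suc k) (liftL 0 s) t)"
| "substL k s (App t e) = App (substL k s t) (substLe k s e)"
| "substL k s (Pair t u) = Pair (substL k s t) (substL k s u)"
| "substL k s (In1 t) = In1 (substL k s t)"
| "substL k s (In2 t) = In2 (substL k s t)"
| "substL k s (Mu t) = Mu (substL k (liftM 0 s) t)"
| "substL k s (Named a t) = Named a (substL k s t)"
| "substLe k s (Tm t) = Tm (substL k s t)"
| "substLe k s Pi1 = Pi1"
| "substLe k s Pi2 = Pi2"
| "substLe k s (Cas u v) = Cas (substL (Suc k) (liftL 0 s) u) (substL (Suc k) (liftL 0 s) v)"

text \<open>substM k e t = t[k :=* e]: every subterm (k v) is replaced
(inductively) by (k (v e)).\<close>
primrec substM :: "nat \<Rightarrow> etrm \<Rightarrow> trm \<Rightarrow> trm"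
  and substMe :: "nat \<Rightarrow> etrm \<Rightarrow> etrm \<Rightarrow> etrm" where
  "substM k e (Var i) = Var i"
| "substM k e (Lam t) = Lam (substM k (liftLe 0 e) t)"
| "substM k e (App t f) = App (substM k e t) (substMe k e f)"
| "substM k e (Pair t u) = Pair (substM k e t) (substM k e u)"
| "substM k e (In1 t) = In1 (substM k e t)"
| "substM k e (In2 t) = In2 (substM k e t)"
| "substM k e (Mu t) = Mu (substM (Suc k) (liftMe 0 e) t)"
| "substM k e (Named a t) =
     (if a = k then Named a (App (substM k e t) e) else Named a (substM k e t))"
| "substMe k e (Tm t) = Tm (substM k e t)"
| "substMe k e Pi1 = Pi1"
| "substMe k e Pi2 = Pi2"
| "substMe k e (Cas u v) = Cas (substM k (liftLe 0 e) u) (substM k (liftLe 0 e) v)"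

inductive red :: "trm \<Rightarrow> trm \<Rightarrow> bool" and rede :: "etrm \<Rightarrow> etrm \<Rightarrow> bool" where
  beta: "red (App (Lam u) (Tm v)) (substL 0 v u)"
| proj1: "red (App (Pair t1 t2) Pi1) t1"
| proj2: "red (App (Pair t1 t2) Pi2) t2"
| case1: "red (App (In1 t) (Cas u1 u2)) (substL 0 t u1)"
| case2: "red (App (In2 t) (Cas u1 u2)) (substL 0 t u2)"
| comm: "red (App (App t (Cas u1 u2)) e)
             (App t (Cas (App u1 (liftLe 0 e)) (App u2 (liftLe 0 e))))"
| mu: "red (App (Mu t) e) (Mu (substM 0 (liftMe 0 e) t))"
| c_Lam: "red t t' \<Longrightarrow> red (Lam t) (Lam t')"
| c_App1: "red t t' \<Longrightarrow> red (App t e) (App t' e)"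
| c_App2: "rede e e' \<Longrightarrow> red (App t e) (App t e')"
| c_Pair1: "red t t' \<Longrightarrow> red (Pair t u) (Pair t' u)"
| c_Pair2: "red u u' \<Longrightarrow> red (Pair t u) (Pair t u')"
| c_In1: "red t t' \<Longrightarrow> red (In1 t) (In1 t')"
| c_In2: "red t t' \<Longrightarrow> red (In2 t) (In2 t')"
| c_Mu: "red t t' \<Longrightarrow> red (Mu t) (Mu t')"
| c_Named: "red t t' \<Longrightarrow> red (Named a t) (Named a t')"
| c_Tm: "red t t' \<Longrightarrow> rede (Tm t) (Tm t')"
| c_Cas1: "red u u' \<Longrightarrow> rede (Cas u v) (Cas u' v)"
| c_Cas2: "red v v' \<Longrightarrow> rede (Cas u v) (Cas u v')"

definition SN :: "trm set" where
  "SN = {t. Wellfounded.accp (conversep red) t}"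

definition SNe :: "etrm set" where
  "SNe = {e. Wellfounded.accp (conversep rede) e}"

definition app_seq :: "trm \<Rightarrow> etrm list \<Rightarrow> trm" where
  "app_seq t ws = foldl App t ws"

definition seq_arrow :: "etrm list set \<Rightarrow> trm set \<Rightarrow> trm set" where
  "seq_arrow S K = {t. \<forall>ws\<in>S. app_seq t ws \<in> K}"

fun is_cas :: "etrm \<Rightarrow> bool" where
  "is_cas (Cas u v) = True"
| "is_cas _ = False"

definition nice_seq :: "etrm list \<Rightarrow> bool" where
  "nice_seq ws \<longleftrightarrow> set ws \<subseteq> SNe \<and> (\<forall>i. i + 1 < length ws \<longrightarrow> \<not> is_cas (ws ! i))"

definition nice_set :: "etrm list set \<Rightarrow> bool" where
  "nice_set X \<longleftrightarrow> (\<forall>ws\<in>X. nice_seq ws)"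

definition arrow :: "trm set \<Rightarrow> trm set \<Rightarrow> trm set" where
  "arrow K L = {t. \<forall>u\<in>K. App t (Tm u) \<in> L}"

definition conj :: "trm set \<Rightarrow> trm set \<Rightarrow> trm set" where
  "conj K L = {t. App t Pi1 \<in> K \<and> App t Pi2 \<in> L}"

text \<open>In de Bruijn form, the bound variables x, y of [x.u, y.v] are index 0
of the bodies u, v; quantification over x, y is subsumed.\<close>
definition disj :: "trm set \<Rightarrow> trm set \<Rightarrow> trm set" where
  "disj K L = {t. \<forall>u v. u \<in> SN \<longrightarrow> v \<in> SN \<longrightarrow>
      (\<forall>r\<in>K. substL 0 r u \<in> SN) \<longrightarrow> (\<forall>s\<in>L. substL 0 s v \<in> SN) \<longrightarrow>
      App t (Cas u v) \<in> SN}"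

inductive_set RR :: "trm set set" where
  RR_N: "SN \<in> RR"
| RR_arrow: "K \<in> RR \<Longrightarrow> L \<in> RR \<Longrightarrow> arrow K L \<in> RR"
| RR_conj: "K \<in> RR \<Longrightarrow> L \<in> RR \<Longrightarrow> conj K L \<in> RR"
| RR_disj: "K \<in> RR \<Longrightarrow> L \<in> RR \<Longrightarrow> disj K L \<in> RR"

definition perp :: "trm set \<Rightarrow> etrm list set" where
  "perp R = \<Union>{X. nice_set X \<and> R = seq_arrow X SN}"

end

theory Submission
  imports Defs
begin

inductive hv :: "trm \<Rightarrow> bool" where
  hv_Var: "hv (Var i)"
| hv_App: "hv t \<Longrightarrow> \<not> is_cas e \<Longrightarrow> hv (App t e)"

inductive_cases hvE: "hv (Lam t)" "hv (Pair t u)" "hv (In1 t)" "hv (In2 t)" "hv (Mu t)"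
  "hv (App t e)"
inductive_cases redAppE: "red (App t e) y"
inductive_cases redVarE: "red (Var i) y"
inductive_cases redeE: "rede (Tm t) y" "rede Pi1 y" "rede Pi2 y" "rede (Cas u v) y"

lemma rede_cas: "rede e e' \<Longrightarrow> is_cas e' = is_cas e"
  by (cases e) (auto elim: redeE)

lemma hv_red: "hv t \<Longrightarrow> red t t' \<Longrightarrow> hv t'"
proof (induction t arbitrary: t' rule: hv.induct)
  case (hv_Var i) then show ?case by (auto elim: redVarE)
next
  case (hv_App t e)
  from hv_App.prems show ?case
    by (cases rule: redAppE) (use hv_App in \<open>auto elim: hvE intro: hv.intros dest: rede_cas\<close>)
qed

lemma SN_App_hv_aux:
  "Wellfounded.accp (conversep red) t \<Longrightarrow> \<forall>e. hv t \<longrightarrow> Wellfounded.accp (conversep rede) e \<longrightarrow> Wellfounded.accp (conversep red) (App t e)"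
proof (induction t rule: accp_induct_rule)
  case (1 t)
  note outer = "1.IH"
  show ?case
  proof (intro allI impI)
    fix e assume ht: "hv t" and ae: "Wellfounded.accp (conversep rede) e"
    from ae show "Wellfounded.accp (conversep red) (App t e)"
    proof (induction e rule: accp_induct_rule)
      case (1 e)
      show ?case
      proof (rule accp.accI)
        fix y assume "conversep red y (App t e)"
        hence r: "red (App t e) y" by simp
        have "(\<exists>t2. red t t2 \<and> y = App t2 e) \<or> (\<exists>e2. rede e e2 \<and> y = App t e2)"
          using r ht by (cases rule: redAppE) (auto elim: hvE)
        thus "Wellfounded.accp (conversep red) y"
        proof (elim disjE exE conjE)
          fix t2 assume c: "red t t2" "y = App t2 e"
          have "hv t2" using hv_red ht c by blast
          moreover have "Wellfounded.accp (conversep rede) e" using 1 by (blast intro: accp.accI)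
          moreover have "conversep red t2 t" using c by simp
          ultimately have "Wellfounded.accp (conversep red) (App t2 e)" using outer by blast
          thus ?thesis using c by simp
        next
          fix e2 assume c: "rede e e2" "y = App t e2"
          have "conversep rede e2 e" using c by simp
          hence "Wellfounded.accp (conversep red) (App t e2)" using "1.IH" by blast
          thus ?thesis using c by simp
        qed
      qed
    qed
  qed
qed

lemma SN_Var: "Wellfounded.accp (conversep red) (Var i)"
  by (rule accp.accI) (auto elim: redVarE)

lemma hv_seq: "\<forall>w\<in>set ws. \<not> is_cas w \<Longrightarrow> hv (app_seq (Var i) ws)"
  by (induction ws rule: rev_induct) (auto simp: app_seq_def intro: hv.intros)

lemma nice_Var: "nice_seq ws \<Longrightarrow> app_seq (Var i) ws \<in> SN"
proof (induction ws rule: rev_induct)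
  case Nil then show ?case by (simp add: app_seq_def SN_def SN_Var)
next
  case (snoc w ws)
  have nc: "\<forall>x\<in>set ws. \<not> is_cas x"
  proof
    fix x assume "x \<in> set ws"
    then obtain j where j: "j < length ws" "ws ! j = x" by (auto simp: in_set_conv_nth)
    with snoc.prems show "\<not> is_cas x" unfolding nice_seq_def
      by (metis add.commute length_append_singleton less_Suc_eq_0_disj nth_append plus_1_eq_Suc
          Suc_less_eq)
  qed
  have "nice_seq ws" using snoc.prems unfolding nice_seq_def
    by (auto simp: nth_append)
  hence "app_seq (Var i) ws \<in> SN" by (rule snoc.IH)
  moreover have "w \<in> SNe" using snoc.prems by (auto simp: nice_seq_def)
  ultimately show ?case using SN_App_hv_aux hv_seq[OF nc]
    by (simp add: app_seq_def SN_def SNe_def)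
qed

lemma SN_App_sub_aux: "Wellfounded.accp (conversep red) s \<Longrightarrow> \<forall>t e. s = App t e \<longrightarrow> Wellfounded.accp (conversep red) t"
proof (induction s rule: accp_induct_rule)
  case (1 s)
  show ?case
  proof (intro allI impI)
    fix t e assume s: "s = App t e"
    show "Wellfounded.accp (conversep red) t"
    proof (rule accp.accI)
      fix y assume "conversep red y t"
      hence "red (App t e) (App y e)" by (auto intro: red_rede.c_App1)
      thus "Wellfounded.accp (conversep red) y" using "1.IH"[of "App y e"] s by blast
    qed
  qed
qed

lemma SN_App_sub: "Wellfounded.accp (conversep red) (App t e) \<Longrightarrow> Wellfounded.accp (conversep red) t"
  using SN_App_sub_aux by blast

lemma SN_Tm: "Wellfounded.accp (conversep red) u \<Longrightarrow> Wellfounded.accp (conversep rede) (Tm u)"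
proof (induction u rule: accp_induct_rule)
  case (1 u)
  show ?case by (rule accp.accI) (use 1 in \<open>auto elim: redeE\<close>)
qed

lemma SN_Pi1: "Wellfounded.accp (conversep rede) Pi1"
  by (rule accp.accI) (auto elim: redeE)
lemma SN_Pi2: "Wellfounded.accp (conversep rede) Pi2"
  by (rule accp.accI) (auto elim: redeE)

lemma SN_Cas_aux: "Wellfounded.accp (conversep red) u \<Longrightarrow> \<forall>v. Wellfounded.accp (conversep red) v \<longrightarrow>
   Wellfounded.accp (conversep rede) (Cas u v)"
proof (induction u rule: accp_induct_rule)
  case (1 u)
  note outer = "1.IH"
  show ?case
  proof (intro allI impI)
    fix v assume "Wellfounded.accp (conversep red) v"
    thus "Wellfounded.accp (conversep rede) (Cas u v)"
    proof (induction v rule: accp_induct_rule)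
      case (1 v)
      show ?case
      proof (rule accp.accI)
        fix y assume "conversep rede y (Cas u v)"
        hence "rede (Cas u v) y" by simp
        hence "(\<exists>u'. red u u' \<and> y = Cas u' v) \<or> (\<exists>v'. red v v' \<and> y = Cas u v')"
          by (cases rule: redeE(4)) auto
        thus "Wellfounded.accp (conversep rede) y"
        proof (elim disjE exE conjE)
          fix u' assume c: "red u u'" "y = Cas u' v"
          have "Wellfounded.accp (conversep red) v" using 1 by (blast intro: accp.accI)
          hence "Wellfounded.accp (conversep rede) (Cas u' v)" using outer[OF conversepI[of red, OF c(1)]] by blast
          thus ?thesis using c(2) by simp
        next
          fix v' assume c: "red v v'" "y = Cas u v'"
          have "conversep red v' v" using c by simp
          hence "Wellfounded.accp (conversep rede) (Cas u v')" using "1.IH" by blast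
          thus ?thesis using c by simp
        qed
      qed
    qed
  qed
qed

lemma SN_Cas: "Wellfounded.accp (conversep red) u \<Longrightarrow> Wellfounded.accp (conversep red) v \<Longrightarrow>
   Wellfounded.accp (conversep rede) (Cas u v)"
  using SN_Cas_aux by blast

lemma app_seq_Cons: "app_seq t (w # ws) = app_seq (App t w) ws"
  by (simp add: app_seq_def)

lemma main:
  assumes "R \<in> RR"
  shows "(\<exists>X. nice_set X \<and> R = seq_arrow X SN) \<and> R \<subseteq> SN"
  using assms
proof (induction rule: RR.induct)
  case RR_N
  have "SN = seq_arrow {[]} SN" by (auto simp: seq_arrow_def app_seq_def)
  moreover have "nice_set {[]}" by (auto simp: nice_set_def nice_seq_def)
  ultimately show ?case by blast
next
  case (RR_arrow K L)
  then obtain XK YL where XK: "nice_set XK" "K = seq_arrow XK SN"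
    and YL: "nice_set YL" "L = seq_arrow YL SN" and KS: "K \<subseteq> SN" and LS: "L \<subseteq> SN" by blast
  define X where "X = {Tm u # ws | u ws. u \<in> K \<and> ws \<in> YL}"
  have "nice_set X" unfolding X_def nice_set_def
  proof (clarify)
    fix u ws assume "u \<in> K" "ws \<in> YL"
    hence "Tm u \<in> SNe" "nice_seq ws" using KS YL(1) SN_Tm
      by (auto simp: SN_def SNe_def nice_set_def)
    thus "nice_seq (Tm u # ws)" unfolding nice_seq_def
      by (auto simp: nth_Cons split: nat.splits)
  qed
  moreover have "arrow K L = seq_arrow X SN"
  proof (rule set_eqI)
    fix t
    have "t \<in> arrow K L \<longleftrightarrow> (\<forall>u\<in>K. \<forall>ws\<in>YL. app_seq t (Tm u # ws) \<in> SN)"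
      using YL(2) by (simp add: arrow_def seq_arrow_def app_seq_Cons)
    also have "\<dots> \<longleftrightarrow> t \<in> seq_arrow X SN" by (auto simp: X_def seq_arrow_def)
    finally show "t \<in> arrow K L \<longleftrightarrow> t \<in> seq_arrow X SN" .
  qed
  moreover have "arrow K L \<subseteq> SN"
  proof
    fix t assume t: "t \<in> arrow K L"
    have "Var 0 \<in> K" using XK nice_Var by (auto simp: seq_arrow_def nice_set_def)
    hence "App t (Tm (Var 0)) \<in> SN" using t LS by (auto simp: arrow_def)
    thus "t \<in> SN" using SN_App_sub by (auto simp: SN_def)
  qed
  ultimately show ?case by blast
next
  case (RR_conj K L)
  then obtain XK YL where XK: "nice_set XK" "K = seq_arrow XK SN"
    and YL: "nice_set YL" "L = seq_arrow YL SN" and KS: "K \<subseteq> SN" and LS: "L \<subseteq> SN" by blast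
  define X where "X = {Pi1 # ws | ws. ws \<in> XK} \<union> {Pi2 # ws | ws. ws \<in> YL}"
  have "nice_set X" unfolding X_def nice_set_def
  proof (clarify)
    fix ws assume "ws \<in> {Pi1 # ws | ws. ws \<in> XK} \<union> {Pi2 # ws | ws. ws \<in> YL}"
    then obtain p vs where p: "ws = p # vs" "p = Pi1 \<or> p = Pi2" "nice_seq vs"
      using XK(1) YL(1) by (auto simp: nice_set_def)
    have "p \<in> SNe" using p(2) SN_Pi1 SN_Pi2 by (auto simp: SNe_def)
    thus "nice_seq ws" using p unfolding nice_seq_def
      by (auto simp: nth_Cons split: nat.splits)
  qed
  moreover have "conj K L = seq_arrow X SN"
  proof (rule set_eqI)
    fix t
    have "t \<in> conj K L \<longleftrightarrow> (\<forall>ws\<in>XK. app_seq t (Pi1 # ws) \<in> SN) \<and> (\<forall>ws\<in>YL. app_seq t (Pi2 # ws) \<in> SN)"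
      using XK(2) YL(2) by (simp add: conj_def seq_arrow_def app_seq_Cons)
    also have "\<dots> \<longleftrightarrow> t \<in> seq_arrow X SN" by (auto simp: X_def seq_arrow_def)
    finally show "t \<in> conj K L \<longleftrightarrow> t \<in> seq_arrow X SN" .
  qed
  moreover have "conj K L \<subseteq> SN"
  proof
    fix t assume t: "t \<in> conj K L"
    hence "App t Pi1 \<in> SN" using KS by (auto simp: conj_def)
    thus "t \<in> SN" using SN_App_sub by (auto simp: SN_def)
  qed
  ultimately show ?case by blast
next
  case (RR_disj K L)
  hence KS: "K \<subseteq> SN" and LS: "L \<subseteq> SN" by auto
  define X where "X = {[Cas u v] | u v. u \<in> SN \<and> v \<in> SN \<and> (\<forall>r\<in>K. substL 0 r u \<in> SN)
     \<and> (\<forall>s\<in>L. substL 0 s v \<in> SN)}"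
  have "nice_set X" unfolding X_def nice_set_def nice_seq_def
    using SN_Cas by (auto simp: SN_def SNe_def)
  moreover have "disj K L = seq_arrow X SN"
  proof (rule set_eqI, rule iffI)
    fix t assume "t \<in> disj K L" thus "t \<in> seq_arrow X SN"
      unfolding X_def disj_def seq_arrow_def app_seq_def by auto
  next
    fix t assume t: "t \<in> seq_arrow X SN"
    show "t \<in> disj K L" unfolding disj_def
    proof (clarify)
      fix u v assume h: "u \<in> SN" "v \<in> SN" "\<forall>r\<in>K. substL 0 r u \<in> SN" "\<forall>s\<in>L. substL 0 s v \<in> SN"
      hence "[Cas u v] \<in> X" unfolding X_def by blast
      thus "App t (Cas u v) \<in> SN" using t by (auto simp: seq_arrow_def app_seq_def)
    qed
  qed
  moreover have "disj K L \<subseteq> SN"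
  proof
    fix t assume t: "t \<in> disj K L"
    have "Var 0 \<in> SN" using SN_Var by (simp add: SN_def)
    moreover have "\<forall>r\<in>K. substL 0 r (Var 0) \<in> SN" "\<forall>r\<in>L. substL 0 r (Var 0) \<in> SN" using KS LS by auto
    ultimately have "App t (Cas (Var 0) (Var 0)) \<in> SN" using t unfolding disj_def by blast
    thus "t \<in> SN" using SN_App_sub by (auto simp: SN_def)
  qed
  ultimately show ?case by blast
qed

theorem lemma7:
  assumes "R \<in> RR"
  shows "nice_set (perp R) \<and> R = seq_arrow (perp R) SN"
proof
  show "nice_set (perp R)" by (auto simp: perp_def nice_set_def)
  from main[OF assms] obtain X0 where X0: "nice_set X0" "R = seq_arrow X0 SN" by blast
  show "R = seq_arrow (perp R) SN"
  proof
    show "R \<subseteq> seq_arrow (perp R) SN"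
      by (auto simp: perp_def seq_arrow_def)
    have "X0 \<subseteq> perp R" using X0 by (auto simp: perp_def)
    thus "seq_arrow (perp R) SN \<subseteq> R" using X0(2) by (auto simp: seq_arrow_def)
  qed
qed

end
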